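(* Let $\mathcal P=\mathcal P(V,R)$ be a binary quadratic operad over a field $\Bbbk$ with $V\neq0$. Then the dendriform splitting operad $\mathrm{pre}\,\mathcal P=\mathrm{preLie}\bullet\mathcal P$ does not satisfy the Dong Property.
   Context: A binary quadratic operad $\mathcal P(V,R)$ is generated by a finite-dimensional $S_2$-module $V$ of binary operations with relations $R\subseteq\mathcal F_V(3)$ ($\mathcal F_V$ the free operad). $\mathrm{preLie}$ is the operad of pre-Lie (left-symmetric) algebras and $\bullet$ denotes the Manin black product of binary quadratic operads (Ginzburg–Kapranov). Formal distributions and the Dong Property: for an algebra $A$ with a family of bilinear operations closed under the $S_2$-action, a formal distribution over $A$ is $a(z)=\sum_{s\in\mathbb Z}a(s)z^{-s-1}$, $a(s)\in A$. Distributions $a,b$ are local if for every operation $*$ there is $N\ge0$ with $(w-z)^N a(w)*b(z)=0$ in $A[[z^{\pm1},w^{\pm1}]]$. For $n\in\mathbb Z_+$ the $n$-product is $(a\,{*}_{(n)}\,b)(w)=\mathrm{Res}_{\xi=0}(\xi-w)^n a(\xi)*b(w)$. An operad satisfies the Dong Property if for every algebra $A$ over it and every three pairwise local distributions $a,b,c$ over $A$, $(a\,{*}_{(n)}\,b)$ and $c$ are local for all $n\in\mathbb Z_+$ and all operations $*$. *)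

theory Defs
  imports Complex_Main "HOL-Library.Function_Algebras"
begin

text \<open>
The S_2-module V of
binary operations has a basis indexed by a finite type 'i (so V is finite
dimensional and nonzero).  The S_2-action is the matrix tau:
tau(e_a) = sum_b (tau b a) e_b, required to be an involution.
An element of F_V(3) is encoded by its coordinates r i a b (i = 0,1,2) with
respect to the tree monomials (cyclic representatives)
  shape 0:  e_b(e_a(x1,x2),x3)
  shape 1:  e_b(e_a(x2,x3),x1)
  shape 2:  e_b(e_a(x3,x1),x2)
(every tree monomial in F_V(3) is uniquely of this form after using the
S_2-action; values r i a b for i >= 3 are ignored).
\<close>

type_synonym ('i, 'k) rel3 = "nat \<Rightarrow> 'i \<Rightarrow> 'i \<Rightarrow> 'k"

record ('i, 'k) bq_operad =
  tau  :: "'i \<Rightarrow> 'i \<Rightarrow> 'k"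
  rels :: "('i, 'k) rel3 set"

definition bq_wf :: "('i::finite, 'k::field) bq_operad \<Rightarrow> bool" where
  "bq_wf P \<longleftrightarrow>
     (\<forall>a c. (\<Sum>b\<in>UNIV. tau P c b * tau P b a) = (if c = a then 1 else 0))"

definition cyc3 :: "('i, 'k) rel3 \<Rightarrow> ('i, 'k) rel3" where
  "cyc3 r = (\<lambda>i a b. r ((i + 2) mod 3) a b)"

definition tr12 :: "('i::finite, 'k::field) bq_operad \<Rightarrow> ('i, 'k) rel3 \<Rightarrow> ('i, 'k) rel3" where
  "tr12 P r = (\<lambda>i c b.
      if i = 0 then (\<Sum>a\<in>UNIV. tau P c a * r 0 a b)
      else if i = 1 then (\<Sum>a\<in>UNIV. tau P c a * r 2 a b)
      else if i = 2 then (\<Sum>a\<in>UNIV. tau P c a * r 1 a b)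
      else 0)"

inductive_set s3_span :: "('i::finite, 'k::field) bq_operad \<Rightarrow> ('i, 'k) rel3 set \<Rightarrow> ('i, 'k) rel3 set"
  for P X where
    base: "r \<in> X \<Longrightarrow> r \<in> s3_span P X"
  | zero: "(\<lambda>i a b. 0) \<in> s3_span P X"
  | add: "r \<in> s3_span P X \<Longrightarrow> s \<in> s3_span P X \<Longrightarrow> (\<lambda>i a b. r i a b + s i a b) \<in> s3_span P X"
  | smult: "r \<in> s3_span P X \<Longrightarrow> (\<lambda>i a b. c * r i a b) \<in> s3_span P X"
  | cyc: "r \<in> s3_span P X \<Longrightarrow> cyc3 r \<in> s3_span P X"
  | tr: "r \<in> s3_span P X \<Longrightarrow> tr12 P r \<in> s3_span P X"

text \<open>P \<bullet> Q = P(V \<otimes> W \<otimes> sgn_2, Psi(R \<otimes> S)), where Psi multiplies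
coordinates of tree monomials of the same shape.\<close>

definition psi :: "('i, 'k::field) rel3 \<Rightarrow> ('j, 'k) rel3 \<Rightarrow> ('i \<times> 'j, 'k) rel3" where
  "psi r s = (\<lambda>i (a1, a2) (b1, b2). r i a1 b1 * s i a2 b2)"

definition black_product ::
  "('i::finite, 'k::field) bq_operad \<Rightarrow> ('j::finite, 'k) bq_operad \<Rightarrow> ('i \<times> 'j, 'k) bq_operad" where
  "black_product P Q =
     \<lparr> tau = (\<lambda>(b1, b2) (a1, a2). - (tau P b1 a1 * tau Q b2 a2)),
       rels = {psi r s | r s. r \<in> s3_span P (rels P) \<and> s \<in> s3_span Q (rels Q)} \<rparr>"

text \<open>Basis of the generating S_2-module of preLie: True = x o y, False = its
opposite y o x.  Relation (left-symmetry):
(x1 o x2) o x3 - x1 o (x2 o x3) - (x2 o x1) o x3 + x2 o (x1 o x3) = 0.\<close>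

definition preLie_rel :: "(bool, 'k::field) rel3" where
  "preLie_rel = (\<lambda>i a b.
      if i = 0 \<and> a \<and> b then 1
      else if i = 1 \<and> a \<and> \<not> b then -1
      else if i = 0 \<and> \<not> a \<and> b then -1
      else if i = 2 \<and> \<not> a \<and> \<not> b then 1
      else 0)"

definition preLie :: "(bool, 'k::field) bq_operad" where
  "preLie = \<lparr> tau = (\<lambda>b a. if b \<noteq> a then 1 else 0), rels = {preLie_rel} \<rparr>"

definition pre_operad :: "('i::finite, 'k::field) bq_operad \<Rightarrow> (bool \<times> 'i, 'k) bq_operad" where
  "pre_operad P = black_product preLie P"

text \<open>An algebra: a k-subspace A of a k-vector space (scalar multiplication sc),
with bilinear operations m j (one for each basis element of V) closed on A,
compatible with the S_2-action and satisfying the relations.\<close>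

definition rel_eval :: "('k \<Rightarrow> 'a \<Rightarrow> 'a) \<Rightarrow> ('i::finite \<Rightarrow> 'a \<Rightarrow> 'a \<Rightarrow> 'a::ab_group_add)
   \<Rightarrow> ('i, 'k) rel3 \<Rightarrow> 'a \<Rightarrow> 'a \<Rightarrow> 'a \<Rightarrow> 'a" where
  "rel_eval sc m r x1 x2 x3 =
     (\<Sum>a\<in>UNIV. \<Sum>b\<in>UNIV.
         sc (r 0 a b) (m b (m a x1 x2) x3)
       + sc (r 1 a b) (m b (m a x2 x3) x1)
       + sc (r 2 a b) (m b (m a x3 x1) x2))"

definition is_algebra :: "('k::field \<Rightarrow> 'a \<Rightarrow> 'a) \<Rightarrow> 'a::ab_group_add set
   \<Rightarrow> ('i::finite, 'k) bq_operad \<Rightarrow> ('i \<Rightarrow> 'a \<Rightarrow> 'a \<Rightarrow> 'a) \<Rightarrow> bool" where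
  "is_algebra sc A P m \<longleftrightarrow>
     vector_space sc \<and>
     0 \<in> A \<and> (\<forall>x\<in>A. \<forall>y\<in>A. x + y \<in> A) \<and> (\<forall>c. \<forall>x\<in>A. sc c x \<in> A) \<and>
     (\<forall>j x y. x \<in> A \<longrightarrow> y \<in> A \<longrightarrow> m j x y \<in> A) \<and>
     (\<forall>j x y z. x \<in> A \<longrightarrow> y \<in> A \<longrightarrow> z \<in> A \<longrightarrow>
        m j (x + y) z = m j x z + m j y z \<and> m j z (x + y) = m j z x + m j z y) \<and>
     (\<forall>j c x y. x \<in> A \<longrightarrow> y \<in> A \<longrightarrow>
        m j (sc c x) y = sc c (m j x y) \<and> m j x (sc c y) = sc c (m j x y)) \<and>
     (\<forall>a x y. x \<in> A \<longrightarrow> y \<in> A \<longrightarrow> m a y x = (\<Sum>b\<in>UNIV. sc (tau P b a) (m b x y))) \<and>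
     (\<forall>r\<in>rels P. \<forall>x1\<in>A. \<forall>x2\<in>A. \<forall>x3\<in>A. rel_eval sc m r x1 x2 x3 = 0)"

text \<open>The operation corresponding to the element sum_j c_j e_j of V.\<close>

definition op_of :: "('k \<Rightarrow> 'a \<Rightarrow> 'a) \<Rightarrow> ('i::finite \<Rightarrow> 'a \<Rightarrow> 'a \<Rightarrow> 'a::ab_group_add)
   \<Rightarrow> ('i \<Rightarrow> 'k) \<Rightarrow> 'a \<Rightarrow> 'a \<Rightarrow> 'a" where
  "op_of sc m c x y = (\<Sum>j\<in>UNIV. sc (c j) (m j x y))"

text \<open>A formal distribution a(z) = sum_s a(s) z^(-s-1) is its coefficient
function a :: int => 'a.  The coefficient of w^(-s-1) z^(-t-1) in
(w - z)^N a(w) * b(z) is  sum_(k=0..N) (-1)^k (N choose k) a(s+N-k) * b(t+k).\<close>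

definition local_wrt :: "('k::field \<Rightarrow> 'a \<Rightarrow> 'a) \<Rightarrow> ('a \<Rightarrow> 'a \<Rightarrow> 'a::ab_group_add)
   \<Rightarrow> (int \<Rightarrow> 'a) \<Rightarrow> (int \<Rightarrow> 'a) \<Rightarrow> bool" where
  "local_wrt sc mu a b \<longleftrightarrow>
     (\<exists>N::nat. \<forall>s t::int.
        (\<Sum>k\<le>N. sc ((-1) ^ k * of_nat (N choose k)) (mu (a (s + int N - int k)) (b (t + int k)))) = 0)"

definition local_dist :: "('k::field \<Rightarrow> 'a \<Rightarrow> 'a) \<Rightarrow> ('i::finite \<Rightarrow> 'a \<Rightarrow> 'a \<Rightarrow> 'a::ab_group_add)
   \<Rightarrow> (int \<Rightarrow> 'a) \<Rightarrow> (int \<Rightarrow> 'a) \<Rightarrow> bool" where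
  "local_dist sc m a b \<longleftrightarrow> (\<forall>c. local_wrt sc (op_of sc m c) a b)"

text \<open>(a *_(n) b)(w) = Res_xi (xi - w)^n a(xi) * b(w); its coefficient at
w^(-t-1) is sum_(k=0..n) (-1)^k (n choose k) a(n-k) * b(t+k).\<close>

definition n_product :: "('k::field \<Rightarrow> 'a \<Rightarrow> 'a) \<Rightarrow> ('a \<Rightarrow> 'a \<Rightarrow> 'a::ab_group_add)
   \<Rightarrow> nat \<Rightarrow> (int \<Rightarrow> 'a) \<Rightarrow> (int \<Rightarrow> 'a) \<Rightarrow> (int \<Rightarrow> 'a)" where
  "n_product sc mu n a b =
     (\<lambda>t. \<Sum>k\<le>n. sc ((-1) ^ k * of_nat (n choose k)) (mu (a (int n - int k)) (b (t + int k))))"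

text \<open>Dong property, for algebras whose underlying vector space lives in the
type 'a (the algebra is a subspace A of a 'k-vector space structure on 'a).\<close>

definition Dong_property_in :: "'a::ab_group_add itself \<Rightarrow> ('i::finite, 'k::field) bq_operad \<Rightarrow> bool" where
  "Dong_property_in (_ :: 'a itself) P \<longleftrightarrow>
     (\<forall>(sc :: 'k \<Rightarrow> 'a \<Rightarrow> 'a) A m a b c.
        is_algebra sc A P m \<and> range a \<subseteq> A \<and> range b \<subseteq> A \<and> range c \<subseteq> A \<and>
        local_dist sc m a b \<and> local_dist sc m b c \<and> local_dist sc m a c \<longrightarrow>
        (\<forall>n cf. local_dist sc m (n_product sc (op_of sc m cf) n a b) c))"

end

theory Submission
  imports Defs
begin

definition scf :: "'k::field \<Rightarrow> (nat \<Rightarrow> 'k) \<Rightarrow> (nat \<Rightarrow> 'k)" where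
  "scf c f = (\<lambda>n. c * f n)"

definition mm :: "('i::finite, 'k::field) bq_operad \<Rightarrow> 'i \<Rightarrow> bool \<times> 'i \<Rightarrow> (nat \<Rightarrow> 'k) \<Rightarrow> (nat \<Rightarrow> 'k) \<Rightarrow> (nat \<Rightarrow> 'k)" where
  "mm P j0 A u v = (\<lambda>n. if n = 3 then (if snd A = j0 then 1 else 0) * u 0 * v 1 - tau P j0 (snd A) * u 1 * v 0
     else if n = 4 then (if fst A \<and> snd A = j0 then 1 else 0) * u 3 * v 2 - (if fst A then 0 else tau P j0 (snd A)) * u 2 * v 3
     else 0)"

lemma sum_fun_at: "(\<Sum>i\<in>S. f i) n = (\<Sum>i\<in>S. f i n)"
  by (induction S rule: infinite_finite_induct) auto

lemma sum_prod_UNIV: "(\<Sum>x\<in>(UNIV::('a::finite \<times> 'b::finite) set). f x) = (\<Sum>a\<in>UNIV. \<Sum>b\<in>UNIV. f (a,b))"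
proof -
  have "(\<Sum>a\<in>UNIV. \<Sum>b\<in>UNIV. f (a,b)) = (\<Sum>x\<in>UNIV \<times> UNIV. f x)"
    by (simp only: sum.cartesian_product split_def prod.collapse)
  then show ?thesis by (simp only: UNIV_Times_UNIV)
qed

lemma vs_scf: "vector_space (scf :: 'k::field \<Rightarrow> _)"
  unfolding vector_space_def module_def scf_def
  by (auto simp: fun_eq_iff algebra_simps)

lemma tau_pre: "tau (pre_operad P) (b1,b2) (a1,a2) = - ((if b1 \<noteq> a1 then 1 else 0) * tau P b2 a2)"
  by (simp add: pre_operad_def black_product_def preLie_def)

lemma equiv_step:
  "(\<Sum>B\<in>UNIV. scf (tau (pre_operad P) B (a1,a2)) (mm P j0 B u v)) n
    = (\<Sum>b2\<in>UNIV. - tau P b2 a2 * mm P j0 (\<not>a1, b2) u v n)"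
  unfolding sum_fun_at sum_prod_UNIV tau_pre
  by (cases a1) (simp_all add: scf_def UNIV_bool)

lemma equiv:
  assumes "bq_wf P"
  shows "mm P j0 A v u = (\<Sum>B\<in>UNIV. scf (tau (pre_operad P) B A) (mm P j0 B u v))"
proof -
  obtain a1 a2 where A: "A = (a1,a2)" by force
  have wf: "\<And>a c. (\<Sum>b\<in>UNIV. tau P c b * tau P b a) = (if c = a then 1 else 0)"
    using assms by (simp add: bq_wf_def)
  show ?thesis
  proof (rule ext)
    fix n
    have "(\<Sum>b2\<in>UNIV. - tau P b2 a2 * mm P j0 (\<not>a1, b2) u v n) = mm P j0 A v u n"
    proof -
      consider "n = 3" | "n = 4" | "n \<noteq> 3 \<and> n \<noteq> 4" by blast
      then show ?thesis
      proof cases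
        case 1
        have "(\<Sum>b2\<in>UNIV. - tau P b2 a2 * mm P j0 (\<not>a1, b2) u v n)
          = (\<Sum>b2\<in>UNIV. - (tau P b2 a2 * (if b2 = j0 then 1 else 0)) * (u 0 * v 1)
               + (tau P j0 b2 * tau P b2 a2) * (u 1 * v 0))"
          using 1 by (intro sum.cong) (auto simp: mm_def algebra_simps)
        also have "\<dots> = (\<Sum>b2\<in>UNIV. - (tau P b2 a2 * (if b2 = j0 then 1 else 0)) * (u 0 * v 1))
               + (\<Sum>b2\<in>UNIV. (tau P j0 b2 * tau P b2 a2) * (u 1 * v 0))"
          by (rule sum.distrib)
        also have "(\<Sum>b2\<in>UNIV. - (tau P b2 a2 * (if b2 = j0 then 1 else 0)) * (u 0 * v 1)) = - tau P j0 a2 * (u 0 * v 1)"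
        proof -
          have "(\<Sum>b2\<in>UNIV. - (tau P b2 a2 * (if b2 = j0 then 1 else 0)) * (u 0 * v 1))
              = (\<Sum>b2\<in>UNIV. (if b2 = j0 then - tau P b2 a2 * (u 0 * v 1) else 0))"
            by (intro sum.cong) auto
          then show ?thesis by simp
        qed
        also have "(\<Sum>b2\<in>UNIV. (tau P j0 b2 * tau P b2 a2) * (u 1 * v 0)) = (if j0 = a2 then 1 else 0) * (u 1 * v 0)"
          by (simp only: sum_distrib_right[symmetric] wf)
        finally show ?thesis using 1 by (auto simp: mm_def A algebra_simps)
      next
        case 2
        show ?thesis
        proof (cases a1)
          case True
          have "(\<Sum>b2\<in>UNIV. - tau P b2 a2 * mm P j0 (\<not>a1, b2) u v n)
             = (\<Sum>b2\<in>UNIV. (tau P j0 b2 * tau P b2 a2) * (u 2 * v 3))"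
            using 2 True by (intro sum.cong) (auto simp: mm_def algebra_simps)
          also have "\<dots> = (if j0 = a2 then 1 else 0) * (u 2 * v 3)"
            by (simp only: sum_distrib_right[symmetric] wf)
          finally show ?thesis using 2 True by (auto simp: mm_def A algebra_simps)
        next
          case False
          have "(\<Sum>b2\<in>UNIV. - tau P b2 a2 * mm P j0 (\<not>a1, b2) u v n)
             = (\<Sum>b2\<in>UNIV. (if b2 = j0 then - tau P b2 a2 * (u 3 * v 2) else 0))"
            using 2 False by (intro sum.cong) (auto simp: mm_def algebra_simps)
          also have "\<dots> = - tau P j0 a2 * (u 3 * v 2)" by simp
          finally show ?thesis using 2 False by (auto simp: mm_def A algebra_simps)
        qed
      next
        case 3
        then show ?thesis by (simp add: mm_def)
      qed
    qed
    then show "mm P j0 A v u n = (\<Sum>B\<in>UNIV. scf (tau (pre_operad P) B A) (mm P j0 B u v)) n"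
      unfolding A equiv_step by simp
  qed
qed


lemma span_inv:
  assumes "r \<in> s3_span (preLie :: (bool,'k::field) bq_operad) {preLie_rel}"
  shows "\<forall>i<3. r i True True + r i False True = 0"
  using assms
proof (induction rule: s3_span.induct)
  case (base r)
  then show ?case by (auto simp: preLie_rel_def)
next
  case zero
  then show ?case by simp
next
  case (add r s)
  then show ?case by (auto simp: algebra_simps)
next
  case (smult r c)
  then show ?case by (auto simp: distrib_left[symmetric])
next
  case (cyc r)
  then show ?case by (auto simp: cyc3_def)
next
  case (tr r)
  have tl: "\<And>c. tau (preLie :: (bool,'k) bq_operad) c = (\<lambda>a. if c \<noteq> a then 1 else 0)"
    by (simp add: preLie_def fun_eq_iff)
  show ?case
  proof (intro allI impI)
    fix i :: nat assume "i < 3"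
    then have "i = 0 \<or> i = 1 \<or> i = 2" by auto
    then show "tr12 preLie r i True True + tr12 preLie r i False True = 0"
      using tr.IH by (auto simp: tr12_def tl UNIV_bool add.commute)
  qed
qed

lemma inner_sum_zero:
  fixes r :: "(bool,'k::field) rel3" and s :: "('i::finite,'k) rel3"
  assumes "\<forall>i<3. r i True True + r i False True = 0" and "i < 3"
  shows "(\<Sum>A\<in>UNIV. \<Sum>B\<in>UNIV. psi r s i A B * ((if fst B \<and> snd B = j0 then 1 else 0) * g (snd A))) = (0::'k::field)"
proof -
  have "(\<Sum>A\<in>UNIV. \<Sum>B\<in>UNIV. psi r s i A B * ((if fst B \<and> snd B = j0 then 1 else 0) * g (snd A)))
     = (\<Sum>a1\<in>UNIV. \<Sum>a2\<in>UNIV. \<Sum>b1\<in>UNIV. \<Sum>b2\<in>UNIV. r i a1 b1 * s i a2 b2 * ((if b1 \<and> b2 = j0 then 1 else 0) * g a2))"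
    unfolding sum_prod_UNIV by (simp add: psi_def)
  also have "\<dots> = (\<Sum>a1\<in>UNIV. \<Sum>a2\<in>UNIV. r i a1 True * (s i a2 j0 * g a2))"
  proof -
    have "\<And>a1 a2. (\<Sum>b2\<in>UNIV. r i a1 True * s i a2 b2 * ((if b2 = j0 then 1 else 0) * g a2))
        = (\<Sum>b2\<in>UNIV. if b2 = j0 then r i a1 True * (s i a2 j0 * g a2) else 0)"
      by (intro sum.cong) auto
    then show ?thesis by (simp add: UNIV_bool)
  qed
  also have "\<dots> = (r i True True + r i False True) * (\<Sum>a2\<in>UNIV. s i a2 j0 * g a2)"
    by (simp add: UNIV_bool sum_distrib_left distrib_right sum.distrib add.commute)
  also have "\<dots> = 0" using assms by simp
  finally show ?thesis .
qed

lemma triple: "mm P j0 B (mm P j0 A u v) w = (\<lambda>n. if n = 4 then (if fst B \<and> snd B = j0 then 1 else 0) * (mm P j0 A u v 3 * w 2) else 0)"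
  by (auto simp: mm_def fun_eq_iff)


lemma rel_zero:
  fixes s :: "('i::finite,'k::field) rel3"
  assumes "r \<in> s3_span (preLie :: (bool,'k) bq_operad) {preLie_rel}"
  shows "rel_eval scf (mm P j0) (psi r s) x1 x2 x3 = 0"
proof (rule ext)
  fix n
  have inv: "\<forall>i<3. r i True True + r i False True = 0" using span_inv[OF assms] .
  define G where "G u v = (\<lambda>n. mm P j0 (True, n) u v 3)" for u v
  have m3: "mm P j0 A u v 3 = G u v (snd A)" for A u v by (simp add: G_def mm_def)
  have Z: "(\<Sum>A\<in>UNIV. \<Sum>B\<in>UNIV. psi r s i A B * ((if fst B \<and> snd B = j0 then 1 else 0) * (G u v (snd A) * w 2))) = 0"
    if "i < 3" for i u v w
    using inner_sum_zero[of r i s j0 "\<lambda>a. G u v a * w 2"] inv that by simp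
  show "rel_eval scf (mm P j0) (psi r s) x1 x2 x3 n = 0 n"
  proof (cases "n = 4")
    case False
    then show ?thesis unfolding rel_eval_def sum_fun_at by (simp add: scf_def triple)
  next
    case True
    have "rel_eval scf (mm P j0) (psi r s) x1 x2 x3 n =
      (\<Sum>A\<in>UNIV. \<Sum>B\<in>UNIV. psi r s 0 A B * ((if fst B \<and> snd B = j0 then 1 else 0) * (G x1 x2 (snd A) * x3 2))
        + psi r s 1 A B * ((if fst B \<and> snd B = j0 then 1 else 0) * (G x2 x3 (snd A) * x1 2))
        + psi r s 2 A B * ((if fst B \<and> snd B = j0 then 1 else 0) * (G x3 x1 (snd A) * x2 2)))"
      unfolding rel_eval_def sum_fun_at using True by (simp add: scf_def triple m3)
    also have "\<dots> = 0"
      by (simp add: sum.distrib Z)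
    finally show ?thesis by simp
  qed
qed


lemma is_alg:
  assumes "bq_wf P"
  shows "is_algebra scf UNIV (pre_operad P) (mm P j0)"
proof -
  have rels: "rels (pre_operad P) = {psi r s | r s. r \<in> s3_span preLie {preLie_rel} \<and> s \<in> s3_span P (rels P)}"
    by (simp add: pre_operad_def black_product_def preLie_def)
  have bil: "\<forall>j x y z. x \<in> UNIV \<longrightarrow> y \<in> UNIV \<longrightarrow> z \<in> UNIV \<longrightarrow>
        mm P j0 j (x + y) z = mm P j0 j x z + mm P j0 j y z \<and> mm P j0 j z (x + y) = mm P j0 j z x + mm P j0 j z y"
    by (simp add: mm_def fun_eq_iff algebra_simps)
  have sca: "\<forall>j c x y. x \<in> UNIV \<longrightarrow> y \<in> UNIV \<longrightarrow>
        mm P j0 j (scf c x) y = scf c (mm P j0 j x y) \<and> mm P j0 j x (scf c y) = scf c (mm P j0 j x y)"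
    by (simp add: mm_def scf_def fun_eq_iff algebra_simps)
  have eqv: "\<forall>a x y. x \<in> UNIV \<longrightarrow> y \<in> UNIV \<longrightarrow> mm P j0 a y x = (\<Sum>b\<in>UNIV. scf (tau (pre_operad P) b a) (mm P j0 b x y))"
    using equiv[OF assms] by blast
  have rl: "\<forall>r\<in>rels (pre_operad P). \<forall>x1\<in>UNIV. \<forall>x2\<in>UNIV. \<forall>x3\<in>UNIV. rel_eval scf (mm P j0) r x1 x2 x3 = 0"
    unfolding rels using rel_zero by blast
  show ?thesis
    unfolding is_algebra_def
    using vs_scf bil sca eqv rl by blast
qed

definition ee :: "nat \<Rightarrow> nat \<Rightarrow> 'k::field" where "ee k = (\<lambda>n. if n = k then 1 else 0)"

lemma op_ind: "op_of scf m (\<lambda>j. if j = J then 1 else 0) x y = m J x y"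
proof (rule ext)
  fix n
  have "(\<Sum>j\<in>UNIV. (if j = J then 1 else 0) * m j x y n) = (\<Sum>j\<in>UNIV. if j = J then m J x y n else 0)"
    by (intro sum.cong) auto
  then show "op_of scf m (\<lambda>j. if j = J then 1 else 0) x y n = m J x y n"
    unfolding op_of_def sum_fun_at scf_def by simp
qed

lemma mm_zero: "v 0 = 0 \<Longrightarrow> v 1 = 0 \<Longrightarrow> u 2 = 0 \<Longrightarrow> u 3 = 0 \<Longrightarrow> mm P j0 A u v = 0"
  by (auto simp: mm_def fun_eq_iff)

lemma op_zero: "(\<And>j. m j x y = 0) \<Longrightarrow> op_of scf m cf x y = 0"
  by (simp add: op_of_def scf_def fun_eq_iff sum_fun_at)

lemma sum_le1: "(\<Sum>k\<le>(1::nat). f k) = f 0 + f 1"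
  by (simp add: atMost_Suc add.commute)


theorem mainTheorem2:
  fixes P :: "('i::finite, 'k::field) bq_operad"
  assumes "bq_wf P"
  shows "\<not> Dong_property_in TYPE(nat \<Rightarrow> 'k) (pre_operad P)"
proof
  assume D: "Dong_property_in TYPE(nat \<Rightarrow> 'k) (pre_operad P)"
  define j0 :: 'i where "j0 = undefined"
  define m where "m = mm P j0"
  define a :: "int \<Rightarrow> nat \<Rightarrow> 'k" where "a = (\<lambda>_. ee 0)"
  define b :: "int \<Rightarrow> nat \<Rightarrow> 'k" where "b = (\<lambda>_. ee 1)"
  define c :: "int \<Rightarrow> nat \<Rightarrow> 'k" where "c = (\<lambda>t. if t = 0 then ee 2 else 0)"
  define J where "J = (True, j0)"
  define cf :: "bool \<times> 'i \<Rightarrow> 'k" where "cf = (\<lambda>j. if j = J then 1 else 0)"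
  have alg: "is_algebra scf UNIV (pre_operad P) m" unfolding m_def by (rule is_alg[OF assms])
  have c0: "c t 0 = 0" "c t 1 = 0" for t by (auto simp: c_def ee_def)
  have lab: "local_dist scf m a b"
    unfolding local_dist_def local_wrt_def
  proof (intro allI exI[of _ 1])
    fix cf s t
    show "(\<Sum>k\<le>1. scf ((- 1) ^ k * of_nat (1 choose k)) (op_of scf m cf (a (s + int 1 - int k)) (b (t + int k)))) = 0"
      unfolding sum_le1 by (simp add: a_def b_def scf_def fun_eq_iff)
  qed
  have lbc: "local_dist scf m b c"
    unfolding local_dist_def local_wrt_def
  proof (intro allI exI[of _ 0])
    fix cf s t
    show "(\<Sum>k\<le>0. scf ((- 1) ^ k * of_nat (0 choose k)) (op_of scf m cf (b (s + int 0 - int k)) (c (t + int k)))) = 0"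
      using c0 by (simp add: op_zero m_def mm_zero b_def ee_def scf_def fun_eq_iff)
  qed
  have lac: "local_dist scf m a c"
    unfolding local_dist_def local_wrt_def
  proof (intro allI exI[of _ 0])
    fix cf s t
    show "(\<Sum>k\<le>0. scf ((- 1) ^ k * of_nat (0 choose k)) (op_of scf m cf (a (s + int 0 - int k)) (c (t + int k)))) = 0"
      using c0 by (simp add: op_zero m_def mm_zero a_def ee_def scf_def fun_eq_iff)
  qed
  have "local_dist scf m (n_product scf (op_of scf m cf) 0 a b) c"
    using D alg lab lbc lac unfolding Dong_property_in_def by blast
  moreover have dprod: "n_product scf (op_of scf m cf) 0 a b = (\<lambda>_. ee 3)"
    unfolding n_product_def cf_def op_ind
    by (auto simp: fun_eq_iff scf_def m_def mm_def J_def a_def b_def ee_def)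
  ultimately have "local_wrt scf (op_of scf m cf) (\<lambda>_. ee 3) c"
    unfolding local_dist_def by simp
  then obtain N where N: "\<And>s t. (\<Sum>k\<le>N. scf ((-1) ^ k * of_nat (N choose k)) (op_of scf m cf (ee 3) (c (t + int k)))) = 0"
    unfolding local_wrt_def by blast
  have "(\<Sum>k\<le>N. scf ((-1) ^ k * of_nat (N choose k)) (op_of scf m cf (ee 3) (c (0 + int k)))) 4 = 1"
  proof -
    have "(\<Sum>k\<le>N. scf ((-1) ^ k * of_nat (N choose k)) (op_of scf m cf (ee 3) (c (0 + int k)))) 4
       = (\<Sum>k\<le>N. if k = 0 then 1 else 0)"
      unfolding sum_fun_at cf_def op_ind
      by (intro sum.cong) (auto simp: scf_def m_def mm_def J_def c_def ee_def)
    then show ?thesis by simp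
  qed
  then show False using N[of 0] by simp
qed

end
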